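(* Let $G$ be a graph obtained as a $3$-clique-sum of graphs $G_1$ and $G_2$ along the clique $T=\{x_1,x_2,x_3\}$, and let $G_i'=G\cap G_i$ for $i=1,2$ (i.e. $G_i$ with those edges of $T$ that were deleted in forming $G$ removed). Let $k$ be an integer. Suppose that $G_1'$ has an AT-orientation $D_1'$ with maximum out-degree at most $k$, and that $G_2$ has an AT-orientation $D_2$ with maximum out-degree at most $k$ such that $d^+_{D_2}(x_1)=0$, $d^+_{D_2}(x_2)\leq 1$, $d^+_{D_2}(x_3)\leq 2$, and every out-neighbour in $D_2$ of each vertex of $T$ lies in $T$. Then $G$ has an AT-orientation $D$ with maximum out-degree at most $k$ such that $d^+_D(v)=d^+_{D_1'}(v)$ for every $v\in V(G_1)$.
   Context: Graphs are finite and simple. The clique-sum of graphs $G$ and $H$ each containing a clique of the same size is obtained from their disjoint union by identifying a clique of $G$ with a clique of $H$ of the same size and possibly deleting some edges of the identified clique; a $3$-clique-sum is one where the cliques have at most $3$ vertices. For an orientation $D$, $d^+_D(v)$ is the out-degree of $v$. An Eulerian subgraph of $D$ is a spanning subdigraph $H$ (not necessarily connected, possibly edgeless) with $d^-_H(v)=d^+_H(v)$ for all $v$; $EE(D)$ (resp. $OE(D)$) is the set of Eulerian subgraphs with an even (resp. odd) number of edges; $D$ is an AT-orientation if $|EE(D)|-|OE(D)|\neq 0$. *)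

theory Defs
  imports Main
begin

definition simple_graph :: "'a set \<Rightarrow> 'a set set \<Rightarrow> bool" where
  "simple_graph V E \<longleftrightarrow> finite V \<and>
     (\<forall>e\<in>E. \<exists>u v. u \<noteq> v \<and> u \<in> V \<and> v \<in> V \<and> e = {u, v})"

definition orientation :: "'a set \<Rightarrow> 'a set set \<Rightarrow> ('a \<times> 'a) set \<Rightarrow> bool" where
  "orientation V E D \<longleftrightarrow> D \<subseteq> V \<times> V \<and>
     (\<forall>(u, v)\<in>D. {u, v} \<in> E) \<and>
     (\<forall>e\<in>E. \<exists>!a. a \<in> D \<and> e = {fst a, snd a})"

definition outdeg :: "('a \<times> 'a) set \<Rightarrow> 'a \<Rightarrow> nat" where
  "outdeg D v = card {w. (v, w) \<in> D}"

definition indeg :: "('a \<times> 'a) set \<Rightarrow> 'a \<Rightarrow> nat" where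
  "indeg D v = card {w. (w, v) \<in> D}"

definition eulerian_subgraphs :: "('a \<times> 'a) set \<Rightarrow> ('a \<times> 'a) set set" where
  "eulerian_subgraphs D = {H. H \<subseteq> D \<and> (\<forall>v. indeg H v = outdeg H v)}"

definition EE :: "('a \<times> 'a) set \<Rightarrow> ('a \<times> 'a) set set" where
  "EE D = {H \<in> eulerian_subgraphs D. even (card H)}"

definition OE :: "('a \<times> 'a) set \<Rightarrow> ('a \<times> 'a) set set" where
  "OE D = {H \<in> eulerian_subgraphs D. odd (card H)}"

definition AT_orientation :: "('a \<times> 'a) set \<Rightarrow> bool" where
  "AT_orientation D \<longleftrightarrow> int (card (EE D)) - int (card (OE D)) \<noteq> 0"

definition max_outdeg_le :: "'a set \<Rightarrow> ('a \<times> 'a) set \<Rightarrow> int \<Rightarrow> bool" where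
  "max_outdeg_le V D k \<longleftrightarrow> (\<forall>v\<in>V. int (outdeg D v) \<le> k)"

end

theory Submission
  imports Defs
begin

lemma out_set_fin: "finite H \<Longrightarrow> finite {w. (v, w) \<in> H}"
  by (rule finite_subset[of _ "snd ` H"]) force+

lemma in_set_fin: "finite H \<Longrightarrow> finite {w. (w, v) \<in> H}"
  by (rule finite_subset[of _ "fst ` H"]) force+

lemma outdeg_Un: "finite A \<Longrightarrow> finite B \<Longrightarrow> A \<inter> B = {} \<Longrightarrow>
   outdeg (A \<union> B) v = outdeg A v + outdeg B v"
proof -
  assume a: "finite A" "finite B" "A \<inter> B = {}"
  have "{w. (v, w) \<in> A \<union> B} = {w. (v, w) \<in> A} \<union> {w. (v, w) \<in> B}" by auto
  moreover have "{w. (v, w) \<in> A} \<inter> {w. (v, w) \<in> B} = {}" using a by auto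
  ultimately show ?thesis unfolding outdeg_def
    by (simp add: card_Un_disjoint a out_set_fin)
qed

lemma indeg_Un: "finite A \<Longrightarrow> finite B \<Longrightarrow> A \<inter> B = {} \<Longrightarrow>
   indeg (A \<union> B) v = indeg A v + indeg B v"
proof -
  assume a: "finite A" "finite B" "A \<inter> B = {}"
  have "{w. (w, v) \<in> A \<union> B} = {w. (w, v) \<in> A} \<union> {w. (w, v) \<in> B}" by auto
  moreover have "{w. (w, v) \<in> A} \<inter> {w. (w, v) \<in> B} = {}" using a by auto
  ultimately show ?thesis unfolding indeg_def
    by (simp add: card_Un_disjoint a in_set_fin)
qed

lemma outdeg_zero: "(\<forall>a\<in>H. fst a \<noteq> v) \<Longrightarrow> outdeg H v = 0"
  unfolding outdeg_def by (metis (no_types, lifting) card.empty empty_Collect_eq fst_conv)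

lemma indeg_zero: "(\<forall>a\<in>H. snd a \<noteq> v) \<Longrightarrow> indeg H v = 0"
  unfolding indeg_def by (metis (no_types, lifting) card.empty empty_Collect_eq snd_conv)

lemma card_fst_sum: assumes "finite H" "finite B"
  shows "card {a\<in>H. fst a \<in> B} = (\<Sum>v\<in>B. outdeg H v)"
proof -
  have e: "{a\<in>H. fst a \<in> B} = (\<Union>v\<in>B. {a\<in>H. fst a = v})" by auto
  have c: "card {a\<in>H. fst a = v} = outdeg H v" for v
  proof -
    have "{a\<in>H. fst a = v} = Pair v ` {w. (v, w) \<in> H}" by force
    moreover have "inj (Pair v)" by (auto simp: inj_def)
    ultimately show ?thesis unfolding outdeg_def by (metis card_image inj_on_subset subset_UNIV)
  qed
  have "card (\<Union>v\<in>B. {a\<in>H. fst a = v}) = (\<Sum>v\<in>B. card {a\<in>H. fst a = v})"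
    by (rule card_UN_disjoint) (use assms in auto)
  then show ?thesis using e c by simp
qed

lemma card_snd_sum: assumes "finite H" "finite B"
  shows "card {a\<in>H. snd a \<in> B} = (\<Sum>v\<in>B. indeg H v)"
proof -
  have e: "{a\<in>H. snd a \<in> B} = (\<Union>v\<in>B. {a\<in>H. snd a = v})" by auto
  have c: "card {a\<in>H. snd a = v} = indeg H v" for v
  proof -
    have "{a\<in>H. snd a = v} = (\<lambda>u. (u, v)) ` {w. (w, v) \<in> H}" by force
    moreover have "inj (\<lambda>u. (u, v))" by (auto simp: inj_def)
    ultimately show ?thesis unfolding indeg_def by (metis card_image inj_on_subset subset_UNIV)
  qed
  have "card (\<Union>v\<in>B. {a\<in>H. snd a = v}) = (\<Sum>v\<in>B. card {a\<in>H. snd a = v})"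
    by (rule card_UN_disjoint) (use assms in auto)
  then show ?thesis using e c by simp
qed

lemma cut:
  assumes fin: "finite H" and eu: "\<forall>v. indeg H v = outdeg H v"
    and cl: "\<forall>a\<in>H. fst a \<in> A \<longrightarrow> snd a \<in> A"
    and aH: "a \<in> H" and sA: "snd a \<in> A"
  shows "fst a \<in> A"
proof -
  define B where "B = A \<inter> (fst ` H \<union> snd ` H)"
  have fB: "finite B" unfolding B_def using fin by auto
  have s: "{b\<in>H. fst b \<in> B} \<subseteq> {b\<in>H. snd b \<in> B}" using cl unfolding B_def by auto
  have "card {b\<in>H. fst b \<in> B} = card {b\<in>H. snd b \<in> B}"
    using card_fst_sum[OF fin fB] card_snd_sum[OF fin fB] eu by simp
  then have "{b\<in>H. fst b \<in> B} = {b\<in>H. snd b \<in> B}"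
    using s by (intro card_subset_eq) (use fin in auto)
  moreover have "a \<in> {b\<in>H. snd b \<in> B}" using aH sA unfolding B_def by auto
  ultimately show ?thesis unfolding B_def by auto
qed

definition sgs :: "('a \<times> 'a) set \<Rightarrow> int" where
  "sgs D = (\<Sum>H\<in>eulerian_subgraphs D. (-1) ^ card H)"

lemma AT_iff: assumes "finite D" shows "AT_orientation D \<longleftrightarrow> sgs D \<noteq> 0"
proof -
  have fe: "finite (eulerian_subgraphs D)" unfolding eulerian_subgraphs_def
    using assms by (metis (no_types, lifting) finite_Pow_iff finite_subset mem_Collect_eq PowI subsetI)
  have u: "eulerian_subgraphs D = EE D \<union> OE D" "EE D \<inter> OE D = {}"
    unfolding EE_def OE_def by auto
  have fE: "finite (EE D)" "finite (OE D)" using fe u by auto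
  have "sgs D = (\<Sum>H\<in>EE D. (-1) ^ card H) + (\<Sum>H\<in>OE D. (-1) ^ card H)"
    unfolding sgs_def u(1) by (rule sum.union_disjoint) (use fE u in auto)
  also have "(\<Sum>H\<in>EE D. (-1::int) ^ card H) = (\<Sum>H\<in>EE D. 1)"
    by (rule sum.cong) (auto simp: EE_def)
  also have "(\<Sum>H\<in>OE D. (-1::int) ^ card H) = (\<Sum>H\<in>OE D. -1)"
    by (rule sum.cong) (auto simp: OE_def)
  finally show ?thesis unfolding AT_orientation_def by simp
qed


lemma K1:
  assumes D1: "\<forall>a\<in>D1. fst a \<in> V \<and> snd a \<in> V" and D2: "\<forall>a\<in>D2. fst a \<notin> V"
    and H: "H \<subseteq> D1 \<union> D2" "finite H" "\<forall>v. indeg H v = outdeg H v"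
    and a: "a \<in> H" "a \<in> D2"
  shows "snd a \<notin> V"
proof -
  define S where "S = fst ` D2"
  have cl: "\<forall>b\<in>H. fst b \<in> - S \<longrightarrow> snd b \<in> - S"
    using H(1) D1 D2 unfolding S_def by fastforce
  have "fst a \<in> S" using a unfolding S_def by auto
  then have "snd a \<in> S" using cut[OF H(2) H(3) cl a(1)] by auto
  then show ?thesis using D2 unfolding S_def by auto
qed

lemma decomp:
  assumes f1: "finite D1" and f2: "finite D2"
    and D1: "\<forall>a\<in>D1. fst a \<in> V \<and> snd a \<in> V" and D2: "\<forall>a\<in>D2. fst a \<notin> V"
  shows "sgs (D1 \<union> D2) = sgs D1 * sgs D2"
proof -
  have disj: "D1 \<inter> D2 = {}" using D1 D2 by auto
  have eqv: "(\<forall>v. indeg (H1 \<union> H2) v = outdeg (H1 \<union> H2) v) \<longleftrightarrow>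
      (\<forall>v. indeg H1 v = outdeg H1 v) \<and> (\<forall>v. indeg H2 v = outdeg H2 v)"
    if h: "H1 \<subseteq> D1" "H2 \<subseteq> D2" "\<forall>a\<in>H2. snd a \<notin> V" for H1 H2
  proof -
    have fh: "finite H1" "finite H2" "H1 \<inter> H2 = {}" using h f1 f2 disj finite_subset by blast+
    have z: "indeg H2 v = 0 \<and> outdeg H2 v = 0" if "v \<in> V" for v
      using that h D2 by (intro conjI indeg_zero outdeg_zero) auto
    have z1: "indeg H1 v = 0 \<and> outdeg H1 v = 0" if "v \<notin> V" for v
      using that h D1 by (intro conjI indeg_zero outdeg_zero) auto
    show ?thesis unfolding indeg_Un[OF fh] outdeg_Un[OF fh]
      by (metis z z1 add_0 add_0_right)
  qed
  define f where "f = (\<lambda>(H1, H2). H1 \<union> (H2 :: ('a \<times> 'a) set))"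
  have im: "eulerian_subgraphs (D1 \<union> D2) = f ` (eulerian_subgraphs D1 \<times> eulerian_subgraphs D2)"
  proof
    show "eulerian_subgraphs (D1 \<union> D2) \<subseteq> f ` (eulerian_subgraphs D1 \<times> eulerian_subgraphs D2)"
    proof
      fix H assume "H \<in> eulerian_subgraphs (D1 \<union> D2)"
      then have H: "H \<subseteq> D1 \<union> D2" "\<forall>v. indeg H v = outdeg H v"
        unfolding eulerian_subgraphs_def by auto
      have fH: "finite H" using H(1) f1 f2 finite_subset by blast
      have s: "\<forall>a\<in>H \<inter> D2. snd a \<notin> V" using K1[OF D1 D2 H(1) fH H(2)] by blast
      have HH: "H = (H \<inter> D1) \<union> (H \<inter> D2)" using H(1) by blast
      have "(\<forall>v. indeg (H \<inter> D1) v = outdeg (H \<inter> D1) v) \<and> (\<forall>v. indeg (H \<inter> D2) v = outdeg (H \<inter> D2) v)"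
        using eqv[of "H \<inter> D1" "H \<inter> D2"] s H(2) HH by auto
      then have "(H \<inter> D1, H \<inter> D2) \<in> eulerian_subgraphs D1 \<times> eulerian_subgraphs D2"
        unfolding eulerian_subgraphs_def by auto
      moreover have "H = f (H \<inter> D1, H \<inter> D2)" unfolding f_def using HH by simp
      ultimately show "H \<in> f ` (eulerian_subgraphs D1 \<times> eulerian_subgraphs D2)" by blast
    qed
  next
    show "f ` (eulerian_subgraphs D1 \<times> eulerian_subgraphs D2) \<subseteq> eulerian_subgraphs (D1 \<union> D2)"
    proof clarify
      fix H1 H2 assume a: "H1 \<in> eulerian_subgraphs D1" "H2 \<in> eulerian_subgraphs D2"
      then have h: "H1 \<subseteq> D1" "H2 \<subseteq> D2" "\<forall>v. indeg H1 v = outdeg H1 v" "\<forall>v. indeg H2 v = outdeg H2 v"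
        unfolding eulerian_subgraphs_def by auto
      have fH: "finite H2" using h f2 finite_subset by blast
      have s: "\<forall>a\<in>H2. snd a \<notin> V" using K1[OF D1 D2 _ fH h(4)] h(2) by blast
      show "f (H1, H2) \<in> eulerian_subgraphs (D1 \<union> D2)"
        using eqv[OF h(1,2) s] h unfolding f_def eulerian_subgraphs_def by auto
    qed
  qed
  have inj: "inj_on f (eulerian_subgraphs D1 \<times> eulerian_subgraphs D2)"
  proof (rule inj_onI)
    fix p q assume a: "p \<in> eulerian_subgraphs D1 \<times> eulerian_subgraphs D2"
      "q \<in> eulerian_subgraphs D1 \<times> eulerian_subgraphs D2" "f p = f q"
    obtain A1 A2 B1 B2 where pq: "p = (A1, A2)" "q = (B1, B2)" by force
    have s: "A1 \<subseteq> D1" "A2 \<subseteq> D2" "B1 \<subseteq> D1" "B2 \<subseteq> D2" "A1 \<union> A2 = B1 \<union> B2"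
      using a unfolding pq eulerian_subgraphs_def f_def by auto
    have "A1 = (A1 \<union> A2) \<inter> D1" "B1 = (B1 \<union> B2) \<inter> D1" "A2 = (A1 \<union> A2) \<inter> D2" "B2 = (B1 \<union> B2) \<inter> D2"
      using s(1-4) disj by blast+
    then show "p = q" using s(5) pq by metis
  qed
  have cd: "card (f p) = card (fst p) + card (snd p)"
    if "p \<in> eulerian_subgraphs D1 \<times> eulerian_subgraphs D2" for p
  proof -
    obtain A B where p: "p = (A, B)" by force
    have "A \<subseteq> D1" "B \<subseteq> D2" using that p unfolding eulerian_subgraphs_def by auto
    then have "finite A" "finite B" "A \<inter> B = {}" using f1 f2 disj finite_subset by blast+
    then show ?thesis unfolding p f_def by (simp add: card_Un_disjoint)
  qed
  have "sgs (D1 \<union> D2) = (\<Sum>p\<in>eulerian_subgraphs D1 \<times> eulerian_subgraphs D2. (-1::int) ^ card (f p))"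
    unfolding sgs_def im by (rule sum.reindex[OF inj, unfolded comp_def])
  also have "\<dots> = (\<Sum>p\<in>eulerian_subgraphs D1 \<times> eulerian_subgraphs D2. (-1::int) ^ card (fst p) * (-1) ^ card (snd p))"
    by (rule sum.cong) (auto simp: cd power_add)
  also have "\<dots> = sgs D1 * sgs D2"
    unfolding sgs_def sum_product sum.cartesian_product by (simp add: case_prod_beta)
  finally show ?thesis .
qed


lemma outdeg0: assumes "finite H" "outdeg H v = 0" shows "(v, w) \<notin> H"
proof
  assume "(v, w) \<in> H"
  then have "w \<in> {w. (v, w) \<in> H}" by simp
  then show False using assms card_0_eq[OF out_set_fin[OF assms(1)]] unfolding outdeg_def by blast
qed

lemma indeg0: assumes "finite H" "indeg H v = 0" shows "(w, v) \<notin> H"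
proof
  assume "(w, v) \<in> H"
  then have "w \<in> {w. (w, v) \<in> H}" by simp
  then show False using assms card_0_eq[OF in_set_fin[OF assms(1)]] unfolding indeg_def by blast
qed

lemma sg_edge: assumes "simple_graph V E" "{u, v} \<in> E" shows "u \<noteq> v \<and> u \<in> V \<and> v \<in> V"
proof -
  obtain a b where ab: "a \<noteq> b" "a \<in> V" "b \<in> V" "{u, v} = {a, b}"
    using assms unfolding simple_graph_def by blast
  then have "u \<in> {a, b}" "v \<in> {a, b}" by auto
  moreover have "u \<noteq> v"
  proof
    assume "u = v"
    then have "{a, b} = {u}" using ab by simp
    then have "a \<in> {u}" "b \<in> {u}" by blast+
    then show False using ab(1) by simp
  qed
  ultimately show ?thesis using ab by auto
qed

theorem lemma2p4:
  fixes V1 V2 :: "'a set" and E1 E2 F :: "'a set set" and x1 x2 x3 :: 'a and k :: int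
    and D1' D2 :: "('a \<times> 'a) set"
  assumes G1: "simple_graph V1 E1" and G2: "simple_graph V2 E2"
    and T_inter: "V1 \<inter> V2 = {x1, x2, x3}"
    and T_distinct: "x1 \<noteq> x2" "x1 \<noteq> x3" "x2 \<noteq> x3"
    and T_clique1: "{x1, x2} \<in> E1" "{x1, x3} \<in> E1" "{x2, x3} \<in> E1"
    and T_clique2: "{x1, x2} \<in> E2" "{x1, x3} \<in> E2" "{x2, x3} \<in> E2"
    and F_sub: "F \<subseteq> {{x1, x2}, {x1, x3}, {x2, x3}}"
    and D1'_or: "orientation V1 ((E1 \<union> E2 - F) \<inter> E1) D1'"
    and D1'_AT: "AT_orientation D1'"
    and D1'_deg: "max_outdeg_le V1 D1' k"
    and D2_or: "orientation V2 E2 D2"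
    and D2_AT: "AT_orientation D2"
    and D2_deg: "max_outdeg_le V2 D2 k"
    and D2_x1: "outdeg D2 x1 = 0"
    and D2_x2: "outdeg D2 x2 \<le> 1"
    and D2_x3: "outdeg D2 x3 \<le> 2"
    and D2_T: "\<forall>x\<in>{x1, x2, x3}. \<forall>w. (x, w) \<in> D2 \<longrightarrow> w \<in> {x1, x2, x3}"
  shows "\<exists>D. orientation (V1 \<union> V2) (E1 \<union> E2 - F) D \<and> AT_orientation D
             \<and> max_outdeg_le (V1 \<union> V2) D k
             \<and> (\<forall>v\<in>V1. outdeg D v = outdeg D1' v)"
proof -
  have fV: "finite V1" "finite V2" using G1 G2 unfolding simple_graph_def by auto
  have D1sub: "D1' \<subseteq> V1 \<times> V1" and D1e: "\<forall>(u, v)\<in>D1'. {u, v} \<in> (E1 \<union> E2 - F) \<inter> E1"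
    and D1u: "\<forall>e\<in>(E1 \<union> E2 - F) \<inter> E1. \<exists>!a. a \<in> D1' \<and> e = {fst a, snd a}"
    using D1'_or unfolding orientation_def by auto
  have D2sub: "D2 \<subseteq> V2 \<times> V2" and D2e: "\<forall>(u, v)\<in>D2. {u, v} \<in> E2"
    and D2u: "\<forall>e\<in>E2. \<exists>!a. a \<in> D2 \<and> e = {fst a, snd a}"
    using D2_or unfolding orientation_def by auto
  have fD1: "finite D1'" using D1sub fV by (meson finite_SigmaI finite_subset)
  have fD2: "finite D2" using D2sub fV by (meson finite_SigmaI finite_subset)
  define D2o where "D2o = {a\<in>D2. fst a \<notin> V1}"
  define D where "D = D1' \<union> D2o"
  have fD2o: "finite D2o" using fD2 unfolding D2o_def by auto
  have D1V: "\<forall>a\<in>D1'. fst a \<in> V1 \<and> snd a \<in> V1" using D1sub by auto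
  have D2oV: "\<forall>a\<in>D2o. fst a \<notin> V1" unfolding D2o_def by auto
  \<comment> \<open>Eulerian subgraphs of D2 avoid T\<close>
  have no1: "(x1, w) \<notin> D2" for w using outdeg0[OF fD2 D2_x1] .
  have a21: "(x2, x1) \<in> D2"
  proof -
    obtain a where a: "a \<in> D2" "{x1, x2} = {fst a, snd a}"
      using ex1_implies_ex[OF D2u[rule_format, OF T_clique2(1)]] by blast
    obtain p q where pq: "a = (p, q)" by force
    have "a = (x1, x2) \<or> a = (x2, x1)" using a(2) unfolding pq by (auto simp: doubleton_eq_iff)
    then show ?thesis using a no1 by auto
  qed
  have out2: "(x2, w) \<in> D2 \<Longrightarrow> w = x1" for w
  proof (rule ccontr)
    assume "(x2, w) \<in> D2" "w \<noteq> x1"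
    then have "{x1, w} \<subseteq> {w. (x2, w) \<in> D2}" using a21 by auto
    then have "card {x1, w} \<le> outdeg D2 x2" unfolding outdeg_def
      by (intro card_mono out_set_fin fD2)
    then show False using D2_x2 \<open>w \<noteq> x1\<close> by auto
  qed
  have eulD2: "eulerian_subgraphs D2 = eulerian_subgraphs D2o"
  proof
    show "eulerian_subgraphs D2o \<subseteq> eulerian_subgraphs D2"
      unfolding eulerian_subgraphs_def D2o_def by auto
    show "eulerian_subgraphs D2 \<subseteq> eulerian_subgraphs D2o"
    proof
      fix H assume "H \<in> eulerian_subgraphs D2"
      then have H: "H \<subseteq> D2" "\<forall>v. indeg H v = outdeg H v" unfolding eulerian_subgraphs_def by auto
      have fH: "finite H" using H fD2 finite_subset by blast
      have o1: "outdeg H x1 = 0" using H(1) no1 by (intro outdeg_zero) auto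
      then have i1: "(w, x1) \<notin> H" for w using indeg0[OF fH] H(2) by metis
      have o2: "outdeg H x2 = 0" using H(1) out2 i1 by (intro outdeg_zero) force
      then have i2: "(w, x2) \<notin> H" for w using indeg0[OF fH] H(2) by metis
      have n3: "(x3, w) \<notin> H" for w
      proof
        assume h: "(x3, w) \<in> H"
        then have "w \<in> {x1, x2, x3}" using D2_T H(1) by auto
        moreover have "w \<noteq> x3" using h H(1) D2e sg_edge[OF G2] by blast
        ultimately show False using h i1 i2 by auto
      qed
      have "\<forall>a\<in>H. fst a \<notin> V1"
      proof
        fix a assume a: "a \<in> H"
        obtain u w where uw: "a = (u, w)" by force
        have "u \<in> V2" using a uw H(1) D2sub by auto
        moreover have "u \<noteq> x1" "u \<noteq> x2" "u \<noteq> x3" using a uw no1 H(1) o2 outdeg0[OF fH o2] n3 by auto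
        ultimately show "fst a \<notin> V1" using T_inter uw by auto
      qed
      then show "H \<in> eulerian_subgraphs D2o" using H unfolding eulerian_subgraphs_def D2o_def by auto
    qed
  qed
  have AT: "AT_orientation D"
  proof -
    have "sgs D = sgs D1' * sgs D2o" unfolding D_def by (rule decomp[OF fD1 fD2o D1V D2oV])
    moreover have "sgs D2o = sgs D2" unfolding sgs_def eulD2 ..
    moreover have "sgs D1' \<noteq> 0" "sgs D2 \<noteq> 0" using AT_iff fD1 fD2 D1'_AT D2_AT by auto
    ultimately show ?thesis using AT_iff[of D] fD1 fD2o unfolding D_def by auto
  qed
  have outV1: "outdeg D v = outdeg D1' v" if "v \<in> V1" for v
  proof -
    have "{w. (v, w) \<in> D} = {w. (v, w) \<in> D1'}" using that unfolding D_def D2o_def by auto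
    then show ?thesis unfolding outdeg_def by simp
  qed
  have outV2: "outdeg D v = outdeg D2 v" if "v \<notin> V1" for v
  proof -
    have "{w. (v, w) \<in> D} = {w. (v, w) \<in> D2}" using that D1V unfolding D_def D2o_def by auto
    then show ?thesis unfolding outdeg_def by simp
  qed
  have deg: "max_outdeg_le (V1 \<union> V2) D k"
    unfolding max_outdeg_le_def
  proof
    fix v assume "v \<in> V1 \<union> V2"
    then show "int (outdeg D v) \<le> k"
      using D1'_deg D2_deg outV1[of v] outV2[of v] unfolding max_outdeg_le_def by (cases "v \<in> V1") auto
  qed
  have Tsub: "{x1, x2, x3} \<subseteq> V1" using T_inter by auto
  have orient: "orientation (V1 \<union> V2) (E1 \<union> E2 - F) D"
    unfolding orientation_def
  proof (intro conjI)
    show "D \<subseteq> (V1 \<union> V2) \<times> (V1 \<union> V2)" using D1sub D2sub unfolding D_def D2o_def by auto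
    show "\<forall>(u, v)\<in>D. {u, v} \<in> E1 \<union> E2 - F"
    proof clarify
      fix u v assume uv: "(u, v) \<in> D"
      show "{u, v} \<in> E1 \<union> E2 - F"
      proof (cases "(u, v) \<in> D1'")
        case True then show ?thesis using D1e by auto
      next
        case False
        then have "(u, v) \<in> D2" "u \<notin> V1" using uv unfolding D_def D2o_def by auto
        moreover have "{u, v} \<notin> F"
        proof
          assume "{u, v} \<in> F"
          then have "u \<in> {x1, x2, x3}" using F_sub by auto
          then show False using Tsub \<open>u \<notin> V1\<close> by auto
        qed
        ultimately show ?thesis using D2e by auto
      qed
    qed
    show "\<forall>e\<in>E1 \<union> E2 - F. \<exists>!a. a \<in> D \<and> e = {fst a, snd a}"
    proof
      fix e assume e: "e \<in> E1 \<union> E2 - F"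
      show "\<exists>!a. a \<in> D \<and> e = {fst a, snd a}"
      proof (cases "e \<in> E1")
        case True
        have eI: "e \<in> (E1 \<union> E2 - F) \<inter> E1" using e True by blast
        have ex: "\<exists>!a. a \<in> D1' \<and> e = {fst a, snd a}" using D1u eI by (rule bspec)
        obtain a where a0: "a \<in> D1' \<and> e = {fst a, snd a}"
          and u0: "\<forall>b. b \<in> D1' \<and> e = {fst b, snd b} \<longrightarrow> b = a"
          by (rule ex1E[OF ex]) blast
        have a: "a \<in> D1'" "e = {fst a, snd a}" using a0 by auto
        have u: "\<And>b. b \<in> D1' \<Longrightarrow> e = {fst b, snd b} \<Longrightarrow> b = a" using u0 by blast
        have eV: "e \<subseteq> V1" using a D1V by auto
        show ?thesis
        proof (rule ex1I[of _ a])
          show "a \<in> D \<and> e = {fst a, snd a}" using a unfolding D_def by auto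
          fix b assume b: "b \<in> D \<and> e = {fst b, snd b}"
          then have "b \<in> D1'" using eV D2oV unfolding D_def by auto
          then show "b = a" using u b by auto
        qed
      next
        case False
        then have e2: "e \<in> E2" using e by auto
        have ex: "\<exists>!a. a \<in> D2 \<and> e = {fst a, snd a}" using D2u e2 by (rule bspec)
        obtain a where a0: "a \<in> D2 \<and> e = {fst a, snd a}"
          and u0: "\<forall>b. b \<in> D2 \<and> e = {fst b, snd b} \<longrightarrow> b = a"
          by (rule ex1E[OF ex]) blast
        have a: "a \<in> D2" "e = {fst a, snd a}" using a0 by auto
        have u: "\<And>b. b \<in> D2 \<Longrightarrow> e = {fst b, snd b} \<Longrightarrow> b = a" using u0 by blast
        have "fst a \<notin> V1"
        proof
          assume f1: "fst a \<in> V1"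
          have "fst a \<in> V2" using a D2sub by auto
          then have ft: "fst a \<in> {x1, x2, x3}" using f1 T_inter by auto
          then have st: "snd a \<in> {x1, x2, x3}" using D2_T a by (metis prod.collapse)
          have "fst a \<noteq> snd a" using a D2e sg_edge[OF G2] by (metis case_prodD prod.collapse)
          then have "e \<in> E1" using ft st a(2) T_clique1 by (auto simp: insert_commute)
          then show False using False by simp
        qed
        then have aD: "a \<in> D2o" using a unfolding D2o_def by auto
        show ?thesis
        proof (rule ex1I[of _ a])
          show "a \<in> D \<and> e = {fst a, snd a}" using a aD unfolding D_def by auto
          fix b assume b: "b \<in> D \<and> e = {fst b, snd b}"
          have "b \<notin> D1'"
          proof
            assume "b \<in> D1'"
            then have "e \<in> E1" using D1e b by (metis (no_types, lifting) IntD2 case_prodD prod.collapse)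
            then show False using False by simp
          qed
          then have "b \<in> D2" using b unfolding D_def D2o_def by auto
          then show "b = a" using u b by auto
        qed
      qed
    qed
  qed
  show ?thesis using orient AT deg outV1 by blast
qed

end
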